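(* For every instance of the single-processor carbon-aware scheduling problem that admits a valid schedule, there exists an optimal valid schedule in which, for every $u\in\{1,\dots,n\}$, the completion time $\sigma(v_u)+\omega(v_u)$ belongs to the set $$\mathcal{E}'=\Big\{x+\sum_{i=r}^{u}\omega(v_i)\;:\;x\in\mathcal{E},\,1\le r\le u\le n\Big\}\cup\Big\{x-\sum_{i=u+1}^{s}\omega(v_i)\;:\;x\in\mathcal{E},\,1\le u\le s\le n\Big\},$$ where $\mathcal{E}=\{b_1,e_1,\dots,e_J\}$; in particular $|\mathcal{E}'|=O(n^3J)$ (indeed $O(n^2 J)$ candidate values per task).
   Context: Single-processor carbon-aware scheduling problem. All quantities are nonnegative integers. One processor must execute tasks $v_1,\dots,v_n$ in this fixed order; task $v_i$ has duration $\omega(v_i)\ge 1$. The horizon $[0,T)$ is partitioned into $J$ consecutive intervals $I_j=[b_j,e_j)$, $1\le j\le J$, with $b_1=0$, $e_j=b_{j+1}$, $e_J=T$, each with a constant green power budget $\mathcal{G}_j\ge 0$ per time unit. The processor consumes idle power $P_{\mathrm{idle}}$ at every time unit, plus working power $P_{\mathrm{work}}$ at every time unit during which it executes a task. A (valid) schedule is an assignment of integer start times $\sigma(v_i)$ with $\sigma(v_1)\ge 0$, $\sigma(v_{i+1})\ge \sigma(v_i)+\omega(v_i)$ for $1\le i<n$, and $\sigma(v_n)+\omega(v_n)\le T$. The processor is active at integer time $t$ iff $\sigma(v_i)\le t<\sigma(v_i)+\omega(v_i)$ for some $i$; the power at $t$ is $\mathcal{P}(t)=P_{\mathrm{idle}}+P_{\mathrm{work}}$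 if active and $P_{\mathrm{idle}}$ otherwise. The total carbon cost is $\mathcal{CC}=\sum_{t=0}^{T-1}\max(\mathcal{P}(t)-\mathcal{G}_{j(t)},0)$, where $t\in I_{j(t)}$; a schedule is optimal if it is valid and has minimum carbon cost. *)

theory Defs
  imports Main
begin

(* Tasks are indexed 1..n; w i = duration of v_i; sigma i = start time of v_i.
   Interval boundaries: e 0 = b_1 = 0, interval I_j = [e (j-1), e j) for j = 1..J,
   e J = T.  G j = green power budget of interval I_j. *)

definition valid_schedule :: "nat \<Rightarrow> (nat \<Rightarrow> nat) \<Rightarrow> nat \<Rightarrow> (nat \<Rightarrow> nat) \<Rightarrow> bool" where
  "valid_schedule n w T sigma \<longleftrightarrow>
     (\<forall>i. 1 \<le> i \<and> i < n \<longrightarrow> sigma i + w i \<le> sigma (i + 1)) \<and>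
     (1 \<le> n \<longrightarrow> sigma n + w n \<le> T)"

definition active :: "nat \<Rightarrow> (nat \<Rightarrow> nat) \<Rightarrow> (nat \<Rightarrow> nat) \<Rightarrow> nat \<Rightarrow> bool" where
  "active n w sigma t \<longleftrightarrow> (\<exists>i\<in>{1..n}. sigma i \<le> t \<and> t < sigma i + w i)"

definition power :: "nat \<Rightarrow> nat \<Rightarrow> nat \<Rightarrow> (nat \<Rightarrow> nat) \<Rightarrow> (nat \<Rightarrow> nat) \<Rightarrow> nat \<Rightarrow> nat" where
  "power Pidle Pwork n w sigma t = (if active n w sigma t then Pidle + Pwork else Pidle)"

definition carbon_cost :: "nat \<Rightarrow> nat \<Rightarrow> nat \<Rightarrow> (nat \<Rightarrow> nat) \<Rightarrow> nat \<Rightarrow> (nat \<Rightarrow> nat) \<Rightarrow> (nat \<Rightarrow> nat)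
      \<Rightarrow> (nat \<Rightarrow> nat) \<Rightarrow> int" where
  "carbon_cost Pidle Pwork n w J e G sigma =
     (\<Sum>j\<in>{1..J}. \<Sum>t\<in>{e (j - 1)..<e j}.
        max (int (power Pidle Pwork n w sigma t) - int (G j)) 0)"

definition optimal_schedule :: "nat \<Rightarrow> nat \<Rightarrow> nat \<Rightarrow> (nat \<Rightarrow> nat) \<Rightarrow> nat \<Rightarrow> nat \<Rightarrow> (nat \<Rightarrow> nat)
      \<Rightarrow> (nat \<Rightarrow> nat) \<Rightarrow> (nat \<Rightarrow> nat) \<Rightarrow> bool" where
  "optimal_schedule Pidle Pwork n w T J e G sigma \<longleftrightarrow>
     valid_schedule n w T sigma \<and>
     (\<forall>sigma'. valid_schedule n w T sigma' \<longrightarrow>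
        carbon_cost Pidle Pwork n w J e G sigma \<le> carbon_cost Pidle Pwork n w J e G sigma')"

definition boundary_set :: "nat \<Rightarrow> (nat \<Rightarrow> nat) \<Rightarrow> nat set" where
  "boundary_set J e = e ` {0..J}"

(* E' (as integers, since x - sum may be negative) *)
definition candidate_set :: "nat \<Rightarrow> (nat \<Rightarrow> nat) \<Rightarrow> nat \<Rightarrow> (nat \<Rightarrow> nat) \<Rightarrow> int set" where
  "candidate_set n w J e =
     {int x + (\<Sum>i=r..u. int (w i)) | x r u. x \<in> boundary_set J e \<and> 1 \<le> r \<and> r \<le> u \<and> u \<le> n}
   \<union> {int x - (\<Sum>i=u+1..s. int (w i)) | x u s. x \<in> boundary_set J e \<and> 1 \<le> u \<and> u \<le> s \<and> s \<le> n}"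

end

theory Submission
  imports Defs
begin

definition gidx :: "(nat \<Rightarrow> nat) \<Rightarrow> nat \<Rightarrow> nat" where
  "gidx e t = (LEAST j. t < e j)"

definition ccost :: "nat \<Rightarrow> nat \<Rightarrow> (nat \<Rightarrow> nat) \<Rightarrow> (nat \<Rightarrow> nat) \<Rightarrow> nat \<Rightarrow> bool \<Rightarrow> int" where
  "ccost Pidle Pwork G e t b = max (int (if b then Pidle + Pwork else Pidle) - int (G (gidx e t))) 0"

lemma sum_intervals:
  assumes "\<forall>k m. k \<le> m \<longrightarrow> m \<le> J \<longrightarrow> e k \<le> e m"
  shows "(\<Sum>j\<in>{1..J}. \<Sum>t\<in>{e (j-1)..<e j}. f j t) = (\<Sum>t\<in>{e 0..<e J}. f (gidx e t) t)"
  using assms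
proof (induction J)
  case 0
  then show ?case by simp
next
  case (Suc J)
  have IH: "(\<Sum>j\<in>{1..J}. \<Sum>t\<in>{e (j-1)..<e j}. f j t) = (\<Sum>t\<in>{e 0..<e J}. f (gidx e t) t)"
    using Suc by auto
  have g: "gidx e t = Suc J" if "t \<in> {e J..<e (Suc J)}" for t
    unfolding gidx_def
  proof (rule Least_equality)
    show "t < e (Suc J)" using that by simp
    fix y assume "t < e y"
    show "Suc J \<le> y"
    proof (rule ccontr)
      assume "\<not> Suc J \<le> y"
      then have "e y \<le> e J" using Suc.prems by auto
      then show False using that \<open>t < e y\<close> by simp
    qed
  qed
  have "(\<Sum>j\<in>{1..Suc J}. \<Sum>t\<in>{e (j-1)..<e j}. f j t)
      = (\<Sum>j\<in>{1..J}. \<Sum>t\<in>{e (j-1)..<e j}. f j t) + (\<Sum>t\<in>{e J..<e (Suc J)}. f (Suc J) t)"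
    by simp
  also have "\<dots> = (\<Sum>t\<in>{e 0..<e J}. f (gidx e t) t) + (\<Sum>t\<in>{e J..<e (Suc J)}. f (gidx e t) t)"
    using IH g by simp
  also have "\<dots> = (\<Sum>t\<in>{e 0..<e (Suc J)}. f (gidx e t) t)"
    by (rule sum.atLeastLessThan_concat) (use Suc.prems in auto)
  finally show ?case .
qed

lemma cost_eq:
  assumes "\<forall>k m. k \<le> m \<longrightarrow> m \<le> J \<longrightarrow> e k \<le> e m" "e 0 = 0" "e J = T"
  shows "carbon_cost Pidle Pwork n w J e G s = (\<Sum>t\<in>{0..<T}. ccost Pidle Pwork G e t (active n w s t))"
  unfolding carbon_cost_def
  using sum_intervals[OF assms(1), of "\<lambda>j t. max (int (power Pidle Pwork n w s t) - int (G j)) 0"] assms(2,3)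
  by (simp add: ccost_def power_def)

lemma sum_two_diff:
  fixes f g :: "nat \<Rightarrow> int"
  assumes "finite A" "p \<in> A" "q \<in> A" "p \<noteq> q" "\<forall>t\<in>A. t \<noteq> p \<longrightarrow> t \<noteq> q \<longrightarrow> f t = g t"
  shows "sum f A - sum g A = (f p - g p) + (f q - g q)"
proof -
  have "sum f A - sum g A = (\<Sum>t\<in>A. f t - g t)" by (simp add: sum_subtractf)
  also have "\<dots> = (\<Sum>t\<in>{p,q}. f t - g t)"
    by (rule sum.mono_neutral_right) (use assms in auto)
  also have "\<dots> = (f p - g p) + (f q - g q)" using assms by simp
  finally show ?thesis .
qed

lemma chain:
  assumes "valid_schedule n w T s" "1 \<le> i" "i < k" "k \<le> n"
  shows "s i + w i \<le> s k"
  using assms(3,4)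
proof (induction k)
  case 0 then show ?case by simp
next
  case (Suc k)
  have v: "s k + w k \<le> s (Suc k)" using assms(1,2) Suc.prems unfolding valid_schedule_def by auto
  show ?case
  proof (cases "i = k")
    case True then show ?thesis using v by simp
  next
    case False then show ?thesis using Suc v by auto
  qed
qed

lemma chain2:
  assumes "valid_schedule n w T s" "1 \<le> i" "i \<le> k" "k \<le> n"
  shows "s i + w i \<le> s k + w k"
proof (cases "i = k")
  case False
  then have "s i + w i \<le> s k" using chain[OF assms(1,2)] assms by auto
  then show ?thesis by simp
qed simp

lemma chain_T:
  assumes "valid_schedule n w T s" "1 \<le> i" "i \<le> n"
  shows "s i + w i \<le> T"
proof -
  have "s i + w i \<le> s n + w n" using chain2[OF assms(1,2,3)] by simp
  moreover have "s n + w n \<le> T" using assms unfolding valid_schedule_def by auto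
  ultimately show ?thesis by simp
qed

lemma block_mono:
  fixes s w :: "nat \<Rightarrow> nat"
  assumes tight: "\<forall>i. a \<le> i \<and> i < b \<longrightarrow> s i + w i = s (Suc i)"
    and "a \<le> i"
  shows "i \<le> k \<Longrightarrow> k \<le> b \<Longrightarrow> s i + w i \<le> s k + w k"
proof (induction k)
  case 0 then show ?case by simp
next
  case (Suc k)
  show ?case
  proof (cases "i = Suc k")
    case False
    then have "s (Suc k) = s k + w k" using tight assms(2) Suc.prems by auto
    then show ?thesis using Suc False by auto
  qed simp
qed

lemma block_start:
  fixes s w :: "nat \<Rightarrow> nat"
  assumes tight: "\<forall>i. a \<le> i \<and> i < b \<longrightarrow> s i + w i = s (Suc i)"
    and "a \<le> i" "i \<le> b"
  shows "s a \<le> s i"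
proof (cases "i = a")
  case False
  obtain j where j: "i = Suc j" using assms False by (cases i) auto
  have "s a + w a \<le> s j + w j" by (rule block_mono[OF tight]) (use assms False j in auto)
  moreover have "s j + w j = s (Suc j)" using tight assms False j by auto
  ultimately show ?thesis using j by simp
qed simp

lemma block_cover:
  fixes s w :: "nat \<Rightarrow> nat"
  assumes tight: "\<forall>i. a \<le> i \<and> i < b \<longrightarrow> s i + w i = s (Suc i)"
    and "s a \<le> t"
  shows "a \<le> k \<Longrightarrow> k \<le> b \<Longrightarrow> t < s k + w k \<Longrightarrow> \<exists>i. a \<le> i \<and> i \<le> k \<and> s i \<le> t \<and> t < s i + w i"
proof (induction k)
  case 0 then show ?case using assms by auto
next
  case (Suc k)
  show ?case
  proof (cases "a = Suc k")
    case True then show ?thesis using Suc.prems assms by auto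
  next
    case False
    show ?thesis
    proof (cases "t < s k + w k")
      case True then show ?thesis using Suc False by fastforce
    next
      case f2: False
      then have "s (Suc k) \<le> t" using tight Suc.prems False f2 by auto
      then show ?thesis using Suc.prems by auto
    qed
  qed
qed

lemma block_closed:
  fixes s w :: "nat \<Rightarrow> nat"
  assumes tight: "\<forall>i. a \<le> i \<and> i < b \<longrightarrow> s i + w i = s (Suc i)"
  shows "a \<le> k \<Longrightarrow> k \<le> b \<Longrightarrow> s k + w k = s a + (\<Sum>i=a..k. w i)"
proof (induction k)
  case 0 then show ?case by simp
next
  case (Suc k)
  show ?case
  proof (cases "a = Suc k")
    case False
    then have "s (Suc k) = s k + w k" using tight Suc.prems by auto
    then show ?thesis using Suc False by (simp add: algebra_simps)
  qed simp
qed

lemma shift_active: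
  fixes s s' w :: "nat \<Rightarrow> nat"
  assumes ab: "1 \<le> a" "a \<le> b" "b \<le> n"
    and tight: "\<forall>i. a \<le> i \<and> i < b \<longrightarrow> s i + w i = s (Suc i)"
    and wpos: "\<forall>i\<in>{1..n}. 1 \<le> w i"
    and inb: "\<forall>i. a \<le> i \<and> i \<le> b \<longrightarrow> s' i = s i + 1"
    and outb: "\<forall>i. \<not>(a \<le> i \<and> i \<le> b) \<longrightarrow> s' i = s i"
    and lo: "\<forall>i. 1 \<le> i \<and> i < a \<longrightarrow> s i + w i \<le> s a"
    and hi: "\<forall>i. b < i \<and> i \<le> n \<longrightarrow> s b + w b + 1 \<le> s i"
  shows "active n w s (s a)" "\<not> active n w s' (s a)" "\<not> active n w s (s b + w b)"
    "active n w s' (s b + w b)"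
    "t \<noteq> s a \<Longrightarrow> t \<noteq> s b + w b \<Longrightarrow> active n w s' t = active n w s t"
proof -
  have bs: "s a \<le> s i" if "a \<le> i" "i \<le> b" for i using block_start[OF tight that] .
  have be: "s i + w i \<le> s b + w b" if "a \<le> i" "i \<le> b" for i using block_mono[OF tight that] by simp
  have wa: "1 \<le> w a" "1 \<le> w b" using wpos ab by auto
  have SE: "s a < s b + w b" using be[of a] wa ab by simp
  have ib: "s' i = s i + 1" if "a \<le> i" "i \<le> b" for i using inb that by blast
  have ob: "s' i = s i" if "i < a \<or> b < i" for i using outb that by auto
  have lo': "s i + w i \<le> s a" if "1 \<le> i" "i < a" for i using lo that by blast
  have hi': "s b + w b + 1 \<le> s i" if "b < i" "i \<le> n" for i using hi that by blast
  show "active n w s (s a)" unfolding active_def using ab wa by (intro bexI[of _ a]) auto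
  show "\<not> active n w s' (s a)" unfolding active_def
  proof
    assume "\<exists>i\<in>{1..n}. s' i \<le> s a \<and> s a < s' i + w i"
    then obtain i where i: "i \<in> {1..n}" "s' i \<le> s a" "s a < s' i + w i" by blast
    show False
    proof (cases "a \<le> i \<and> i \<le> b")
      case True then show ?thesis using i ib[of i] bs[of i] by simp
    next
      case False
      then have "i < a \<or> b < i" by auto
      then show ?thesis
      proof
        assume "i < a" then show False using i ob[of i] lo'[of i] by simp
      next
        assume "b < i" then show False using i ob[of i] hi'[of i] SE by simp
      qed
    qed
  qed
  show "\<not> active n w s (s b + w b)" unfolding active_def
  proof
    assume "\<exists>i\<in>{1..n}. s i \<le> s b + w b \<and> s b + w b < s i + w i"
    then obtain i where i: "i \<in> {1..n}" "s i \<le> s b + w b" "s b + w b < s i + w i" by blast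
    show False
    proof (cases "a \<le> i \<and> i \<le> b")
      case True then show ?thesis using i be[of i] by simp
    next
      case False
      then have "i < a \<or> b < i" by auto
      then show ?thesis
      proof
        assume "i < a" then show False using i lo'[of i] SE by simp
      next
        assume "b < i" then show False using i hi'[of i] by simp
      qed
    qed
  qed
  show "active n w s' (s b + w b)" unfolding active_def using ab wa ib[of b] by (intro bexI[of _ b]) auto
  assume t: "t \<noteq> s a" "t \<noteq> s b + w b"
  show "active n w s' t = active n w s t"
  proof (cases "s a < t \<and> t < s b + w b")
    case True
    obtain i where i: "a \<le> i" "i \<le> b" "s i \<le> t" "t < s i + w i"
      using block_cover[OF tight, of t b] True ab by auto
    have t1: "s a \<le> t - 1" "t - 1 < s b + w b" using True by auto
    obtain i' where i': "a \<le> i'" "i' \<le> b" "s i' \<le> t - 1" "t - 1 < s i' + w i'"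
      using block_cover[OF tight t1(1) _ _ t1(2)] ab by auto
    have "active n w s t" unfolding active_def using i ab by (intro bexI[of _ i]) auto
    moreover have "active n w s' t" unfolding active_def using i' ab ib[of i'] True
      by (intro bexI[of _ i']) auto
    ultimately show ?thesis by simp
  next
    case False
    then have tt: "t < s a \<or> s b + w b < t" using t by auto
    have nb: "\<not> (s i \<le> t \<and> t < s i + w i) \<and> \<not> (s' i \<le> t \<and> t < s' i + w i)"
      if "a \<le> i" "i \<le> b" for i using tt bs[OF that] be[OF that] ib[OF that] by auto
    have eq: "(s' i \<le> t \<and> t < s' i + w i) = (s i \<le> t \<and> t < s i + w i)" for i
    proof (cases "a \<le> i \<and> i \<le> b")
      case True then show ?thesis using nb[of i] by blast
    next
      case False then show ?thesis using ob[of i] by auto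
    qed
    show ?thesis unfolding active_def using eq by simp
  qed
qed


lemma e_mono_all:
  fixes J :: nat and e :: "nat \<Rightarrow> nat"
  assumes "\<forall>j\<in>{1..J}. e (j - 1) \<le> e j"
  shows "\<forall>k m. k \<le> m \<longrightarrow> m \<le> J \<longrightarrow> (e k :: nat) \<le> e m"
proof (intro allI impI)
  fix k m :: nat assume "k \<le> m" "m \<le> J"
  then show "e k \<le> e m"
  proof (induction m)
    case 0 then show ?case by simp
  next
    case (Suc m)
    show ?case
    proof (cases "k = Suc m")
      case False
      then have "e k \<le> e m" using Suc by auto
      moreover have "e m \<le> e (Suc m)" using assms Suc.prems by force
      ultimately show ?thesis by simp
    qed simp
  qed
qed

lemma gidx_step:
  assumes em: "\<forall>k m. k \<le> m \<longrightarrow> m \<le> J \<longrightarrow> (e k :: nat) \<le> e m"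
    and e0: "e 0 = 0" and eJ: "e J = T"
    and t: "Suc t < T" "Suc t \<notin> boundary_set J e"
  shows "gidx e t = gidx e (Suc t)"
proof -
  define j where "j = (LEAST j. Suc t < e j)"
  have ex: "Suc t < e J" using t eJ by simp
  have jJ: "j \<le> J" unfolding j_def using ex by (rule Least_le)
  have tj: "Suc t < e j" unfolding j_def using ex by (rule LeastI)
  have j0: "j \<noteq> 0"
  proof
    assume "j = 0" then show False using tj e0 by simp
  qed
  have "\<not> Suc t < e (j - 1)" unfolding j_def
    by (rule not_less_Least) (use j0 in \<open>auto simp: j_def\<close>)
  moreover have "e (j - 1) \<noteq> Suc t"
  proof
    assume "e (j - 1) = Suc t"
    moreover have "j - 1 \<in> {0..J}" using jJ by simp
    ultimately have "Suc t \<in> e ` {0..J}" by (metis image_eqI)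
    then show False using t(2) unfolding boundary_set_def by simp
  qed
  ultimately have ej: "e (j - 1) \<le> t" by simp
  have "gidx e t = j" unfolding gidx_def
  proof (rule Least_equality)
    show "t < e j" using tj by simp
    fix y assume "t < e y"
    show "j \<le> y"
    proof (rule ccontr)
      assume "\<not> j \<le> y"
      then have "e y \<le> e (j - 1)" using em jJ by auto
      then show False using ej \<open>t < e y\<close> by simp
    qed
  qed
  then show ?thesis by (simp add: gidx_def j_def)
qed

lemma card_part:
  shows "finite (candidate_set n w J e) \<and> card (candidate_set n w J e) \<le> (J + 1) * n * (n + 1)"
proof -
  define F where "F = (\<lambda>(x::nat, p::nat, q::nat). if p \<le> q then int x + (\<Sum>i=p..q. int (w i))
       else int x - (\<Sum>i=q+1..p-1. int (w i)))"
  define D where "D = boundary_set J e \<times> ({1..n+1} \<times> {1..n})"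
  have sub: "candidate_set n w J e \<subseteq> F ` D"
  proof
    fix y assume "y \<in> candidate_set n w J e"
    then consider (A) x r u where "y = int x + (\<Sum>i=r..u. int (w i))" "x \<in> boundary_set J e" "1 \<le> r" "r \<le> u" "u \<le> n"
      | (B) x u s where "y = int x - (\<Sum>i=u+1..s. int (w i))" "x \<in> boundary_set J e" "1 \<le> u" "u \<le> s" "s \<le> n"
      unfolding candidate_set_def by blast
    then show "y \<in> F ` D"
    proof cases
      case A
      then show ?thesis unfolding D_def by (intro image_eqI[of _ _ "(x, r, u)"]) (auto simp: F_def)
    next
      case B
      then show ?thesis unfolding D_def by (intro image_eqI[of _ _ "(x, Suc s, u)"]) (auto simp: F_def)
    qed
  qed
  have fB: "finite (boundary_set J e)" "card (boundary_set J e) \<le> J + 1"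
    unfolding boundary_set_def using card_image_le[of "{0..J}" e] by auto
  have fD: "finite D" using fB unfolding D_def by auto
  have "card D \<le> (J + 1) * ((n + 1) * n)"
    unfolding D_def card_cartesian_product using mult_le_mono1[OF fB(2), of "(n + 1) * n"] by simp
  then have "card (F ` D) \<le> (J + 1) * n * (n + 1)" using card_image_le[OF fD, of F]
    by (simp add: algebra_simps)
  moreover have "finite (F ` D)" using fD by simp
  ultimately show ?thesis using sub card_mono finite_subset by (metis le_trans)
qed


theorem mainTheorem3:
  fixes n J T Pidle Pwork :: nat and w e G :: "nat \<Rightarrow> nat"
  assumes J_pos: "1 \<le> J"
    and e_start: "e 0 = 0"
    and e_mono: "\<forall>j\<in>{1..J}. e (j - 1) \<le> e j"
    and e_end: "e J = T"
    and w_pos: "\<forall>i\<in>{1..n}. 1 \<le> w i"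
    and feasible: "\<exists>sigma. valid_schedule n w T sigma"
  shows "(\<exists>sigma. optimal_schedule Pidle Pwork n w T J e G sigma \<and>
            (\<forall>u\<in>{1..n}. int (sigma u + w u) \<in> candidate_set n w J e))
         \<and> finite (candidate_set n w J e)
         \<and> card (candidate_set n w J e) \<le> (J + 1) * n * (n + 1)"
proof -
  have em: "\<forall>k m. k \<le> m \<longrightarrow> m \<le> J \<longrightarrow> e k \<le> e m" using e_mono_all[OF e_mono] .
  define cst where "cst s = carbon_cost Pidle Pwork n w J e G s" for s
  define cc where "cc = ccost Pidle Pwork G e"
  define c where "c t = cc t True - cc t False" for t
  have cost: "cst s = (\<Sum>t\<in>{0..<T}. cc t (active n w s t))" for s
    unfolding cst_def cc_def using cost_eq[OF em e_start e_end] by simp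
  have cnn: "0 \<le> cst s" for s unfolding cst_def carbon_cost_def by (intro sum_nonneg) auto
  have c_step: "c t = c (Suc t)" if "Suc t < T" "Suc t \<notin> boundary_set J e" for t
    using gidx_step[OF em e_start e_end that] unfolding c_def cc_def ccost_def by simp
  have shift_cost: "cst s' - cst s = c (s b + w b) - c (s a)"
    if ab: "1 \<le> a" "a \<le> b" "b \<le> n"
    and tight: "\<forall>i. a \<le> i \<and> i < b \<longrightarrow> s i + w i = s (Suc i)"
    and inb: "\<forall>i. a \<le> i \<and> i \<le> b \<longrightarrow> s' i = s i + 1"
    and outb: "\<forall>i. \<not>(a \<le> i \<and> i \<le> b) \<longrightarrow> s' i = s i"
    and lo: "\<forall>i. 1 \<le> i \<and> i < a \<longrightarrow> s i + w i \<le> s a"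
    and hi: "\<forall>i. b < i \<and> i \<le> n \<longrightarrow> s b + w b + 1 \<le> s i"
    and ET: "s b + w b < T"
    for a b and s s' :: "nat \<Rightarrow> nat"
  proof -
    note A = shift_active[OF ab tight w_pos inb outb lo hi]
    have SE: "s a < s b + w b"
      using block_mono[OF tight, of a b] ab w_pos by force
    have "cst s' - cst s = (cc (s b + w b) (active n w s' (s b + w b)) - cc (s b + w b) (active n w s (s b + w b)))
       + (cc (s a) (active n w s' (s a)) - cc (s a) (active n w s (s a)))"
      unfolding cost by (rule sum_two_diff) (use SE ET A(5) in auto)
    then show ?thesis using A(1-4) unfolding c_def by simp
  qed
  obtain s0 where s0: "valid_schedule n w T s0" using feasible by blast
  obtain so where so: "valid_schedule n w T so" "\<forall>y. valid_schedule n w T y \<longrightarrow> nat (cst so) \<le> nat (cst y)"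
    using ex_has_least_nat[of "valid_schedule n w T" s0 "\<lambda>s. nat (cst s)"] s0 by blast
  have "optimal_schedule Pidle Pwork n w T J e G so"
    unfolding optimal_schedule_def
  proof (intro conjI allI impI)
    fix y assume "valid_schedule n w T y"
    then have "nat (cst so) \<le> nat (cst y)" using so by blast
    then have "cst so \<le> cst y" using cnn[of y] nat_le_eq_zle by blast
    then show "carbon_cost Pidle Pwork n w J e G so \<le> carbon_cost Pidle Pwork n w J e G y"
      unfolding cst_def .
  qed (rule so(1))
  then obtain sigma where opt: "optimal_schedule Pidle Pwork n w T J e G sigma"
    and minsum: "\<forall>y. optimal_schedule Pidle Pwork n w T J e G y \<longrightarrow> (\<Sum>i=1..n. sigma i) \<le> (\<Sum>i=1..n. y i)"
    using ex_has_least_nat[of "optimal_schedule Pidle Pwork n w T J e G" so "\<lambda>s. \<Sum>i=1..n. s i"] by blast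
  have val: "valid_schedule n w T sigma" using opt unfolding optimal_schedule_def by simp
  have optc: "cst sigma \<le> cst y" if "valid_schedule n w T y" for y
    using opt that unfolding optimal_schedule_def cst_def by simp
  have cand: "int (sigma u + w u) \<in> candidate_set n w J e" if u: "u \<in> {1..n}" for u
  proof (rule ccontr)
    assume notin: "int (sigma u + w u) \<notin> candidate_set n w J e"
    define tg where "tg i = (sigma i + w i = sigma (Suc i))" for i
    define PA where "PA a = (1 \<le> a \<and> a \<le> u \<and> (\<forall>i. a \<le> i \<and> i < u \<longrightarrow> tg i))" for a
    define PB where "PB b = (b \<le> n \<and> u \<le> b \<and> (\<forall>i. u \<le> i \<and> i < b \<longrightarrow> tg i))" for b
    define a where "a = (LEAST a. PA a)"
    define b where "b = (GREATEST b. PB b)"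
    have PAu: "PA u" using u unfolding PA_def by auto
    have PBu: "PB u" using u unfolding PB_def by auto
    have Pa: "PA a" unfolding a_def using PAu by (rule LeastI)
    have Pb: "PB b" unfolding b_def using PBu by (rule GreatestI_nat) (auto simp: PB_def)
    have amax: "a = 1 \<or> \<not> tg (a - 1)"
    proof (rule ccontr)
      assume "\<not> (a = 1 \<or> \<not> tg (a - 1))"
      then have "PA (a - 1)" using Pa unfolding PA_def
        by (metis One_nat_def Suc_pred' diff_le_self le_antisym less_one linorder_not_le
            not_less_eq_eq le_trans)
      then have "a \<le> a - 1" unfolding a_def by (rule Least_le)
      moreover have "1 \<le> a" using Pa unfolding PA_def by simp
      ultimately show False by linarith
    qed
    have bmax: "b = n \<or> \<not> tg b"
    proof (rule ccontr)
      assume nb: "\<not> (b = n \<or> \<not> tg b)"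
      then have "PB (Suc b)" using Pb unfolding PB_def
        by (metis le_SucI le_neq_implies_less less_Suc_eq Suc_leI)
      then have "Suc b \<le> b" unfolding b_def by (rule Greatest_le_nat) (auto simp: PB_def)
      then show False by simp
    qed
    have ab: "1 \<le> a" "a \<le> u" "u \<le> b" "b \<le> n" using Pa Pb unfolding PA_def PB_def by auto
    have tight: "\<forall>i. a \<le> i \<and> i < b \<longrightarrow> sigma i + w i = sigma (Suc i)"
      using Pa Pb unfolding PA_def PB_def tg_def by (metis linorder_not_le)
    define S where "S = sigma a"
    define E where "E = sigma b + w b"
    have cu: "sigma u + w u = S + (\<Sum>i=a..u. w i)"
      unfolding S_def using block_closed[OF tight] ab by simp
    have cE: "E = S + (\<Sum>i=a..b. w i)"
      unfolding S_def E_def using block_closed[OF tight] ab by simp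
    have split: "(\<Sum>i=a..b. w i) = (\<Sum>i=a..u. w i) + (\<Sum>i=u+1..b. w i)"
      using sum.ub_add_nat[of a u w "b - u"] ab by simp
    have SnB: "S \<notin> boundary_set J e"
    proof
      assume "S \<in> boundary_set J e"
      then have "int (sigma u + w u) \<in> candidate_set n w J e"
        unfolding candidate_set_def cu using ab
        by (intro UnI1 CollectI exI[of _ S] exI[of _ a] exI[of _ u]) (auto simp: of_nat_sum)
      then show False using notin by simp
    qed
    have EnB: "E \<notin> boundary_set J e"
    proof
      assume "E \<in> boundary_set J e"
      have eqE: "int (sigma u + w u) = int E - (\<Sum>i=u+1..b. int (w i))"
        using cu cE split by (simp add: of_nat_sum)
      have "int (sigma u + w u) \<in> candidate_set n w J e"
        unfolding candidate_set_def eqE using ab \<open>E \<in> boundary_set J e\<close>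
        by (intro UnI2 CollectI exI[of _ E] exI[of _ u] exI[of _ b]) auto
      then show False using notin by simp
    qed
    have B0: "0 \<in> boundary_set J e" "T \<in> boundary_set J e"
      unfolding boundary_set_def using e_start e_end by force+
    have S1: "1 \<le> S" using SnB B0 by (cases S) auto
    have ET0: "E \<le> T" unfolding E_def using chain_T[OF val] ab by simp
    have ET: "E < T" using ET0 EnB B0 by (cases "E = T") auto
    have Sb: "1 \<le> sigma i" if "a \<le> i" "i \<le> b" for i
      using block_start[OF tight that] S1 unfolding S_def by simp
    have v1: "sigma i + w i \<le> sigma (Suc i)" if "1 \<le> i" "i < n" for i
      using val that unfolding valid_schedule_def by simp
    have vn: "1 \<le> n \<Longrightarrow> sigma n + w n \<le> T" using val unfolding valid_schedule_def by simp
    have hiE: "E \<le> sigma i" if "b < i" "i \<le> n" for i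
    proof -
      have "E \<le> sigma (Suc b)" unfolding E_def using v1[of b] ab that by simp
      moreover have "sigma (Suc b) \<le> sigma i"
        using chain[OF val, of "Suc b" i] that by (cases "i = Suc b") auto
      ultimately show ?thesis by simp
    qed
    have hiE1: "E + 1 \<le> sigma i" if "b < i" "i \<le> n" for i
    proof -
      have "b \<noteq> n" using that by simp
      then have "\<not> tg b" using bmax by simp
      then have "E < sigma (Suc b)" unfolding E_def tg_def using v1[of b] ab that by simp
      moreover have "sigma (Suc b) \<le> sigma i"
        using chain[OF val, of "Suc b" i] that by (cases "i = Suc b") auto
      ultimately show ?thesis by simp
    qed
    have loS: "sigma i + w i \<le> S" if "1 \<le> i" "i < a" for i
      using chain[OF val that(1) that(2)] ab unfolding S_def by simp
    have loS1: "sigma i + w i < S" if "1 \<le> i" "i < a" for i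
    proof -
      have "a \<noteq> 1" using that by simp
      then have ntg: "\<not> tg (a - 1)" using amax by simp
      have "sigma (a - 1) + w (a - 1) \<le> sigma (Suc (a - 1))" using v1[of "a - 1"] that ab by simp
      then have "sigma (a - 1) + w (a - 1) < S" using ntg that unfolding tg_def S_def by simp
      moreover have "sigma i + w i \<le> sigma (a - 1) + w (a - 1)"
        using chain2[OF val that(1), of "a - 1"] that ab by simp
      ultimately show ?thesis by simp
    qed
    define sR where "sR i = (if a \<le> i \<and> i \<le> b then sigma i + 1 else sigma i)" for i
    define sL where "sL i = (if a \<le> i \<and> i \<le> b then sigma i - 1 else sigma i)" for i
    have validR: "valid_schedule n w T sR"
      unfolding valid_schedule_def
    proof (intro conjI allI impI)
      fix i assume i: "1 \<le> i \<and> i < n"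
      show "sR i + w i \<le> sR (i + 1)"
      proof (cases "i = b")
        case True
        then show ?thesis using hiE1[of "Suc b"] i unfolding sR_def E_def by simp
      next
        case False
        then show ?thesis using v1[of i] i unfolding sR_def by auto
      qed
    next
      assume "1 \<le> n"
      then show "sR n + w n \<le> T"
        using vn ET ab unfolding sR_def E_def by (cases "b = n") auto
    qed
    have validL: "valid_schedule n w T sL"
      unfolding valid_schedule_def
    proof (intro conjI allI impI)
      fix i assume i: "1 \<le> i \<and> i < n"
      show "sL i + w i \<le> sL (i + 1)"
      proof (cases "Suc i = a")
        case True
        then show ?thesis using loS1[of i] i ab unfolding sL_def S_def by auto
      next
        case False
        then show ?thesis using v1[of i] i Sb[of i] Sb[of "Suc i"] unfolding sL_def by auto
      qed
    next
      assume "1 \<le> n"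
      then show "sL n + w n \<le> T"
        using vn unfolding sL_def by auto
    qed
    have R: "cst sR - cst sigma = c E - c S"
      unfolding E_def S_def
    proof (rule shift_cost[OF ab(1) _ ab(4) tight])
      show "a \<le> b" using ab by simp
      show "\<forall>i. a \<le> i \<and> i \<le> b \<longrightarrow> sR i = sigma i + 1" unfolding sR_def by simp
      show "\<forall>i. \<not> (a \<le> i \<and> i \<le> b) \<longrightarrow> sR i = sigma i" unfolding sR_def by simp
      show "\<forall>i. 1 \<le> i \<and> i < a \<longrightarrow> sigma i + w i \<le> sigma a" using loS unfolding S_def by simp
      show "\<forall>i. b < i \<and> i \<le> n \<longrightarrow> sigma b + w b + 1 \<le> sigma i" using hiE1 unfolding E_def by simp
      show "sigma b + w b < T" using ET unfolding E_def .
    qed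
    have sLa: "sL a = S - 1" unfolding sL_def S_def using ab by simp
    have sLb: "sL b + w b = E - 1" unfolding sL_def E_def using ab Sb[of b] by simp
    have L: "cst sigma - cst sL = c (E - 1) - c (S - 1)"
      unfolding sLa[symmetric] sLb[symmetric]
    proof (rule shift_cost[OF ab(1) _ ab(4)])
      show "a \<le> b" using ab by simp
      show "\<forall>i. a \<le> i \<and> i < b \<longrightarrow> sL i + w i = sL (Suc i)"
        using tight Sb unfolding sL_def by auto
      show "\<forall>i. a \<le> i \<and> i \<le> b \<longrightarrow> sigma i = sL i + 1"
      proof (intro allI impI)
        fix i assume "a \<le> i \<and> i \<le> b"
        then show "sigma i = sL i + 1" using Sb[of i] unfolding sL_def by simp
      qed
      show "\<forall>i. \<not> (a \<le> i \<and> i \<le> b) \<longrightarrow> sigma i = sL i" unfolding sL_def by simp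
      show "\<forall>i. 1 \<le> i \<and> i < a \<longrightarrow> sL i + w i \<le> sL a" using loS1 sLa unfolding sL_def by fastforce
      show "\<forall>i. b < i \<and> i \<le> n \<longrightarrow> sL b + w b + 1 \<le> sL i" using hiE sLb unfolding sL_def
        using ab Sb[of b] E_def by auto
      show "sL b + w b < T" using ET sLb by simp
    qed
    have SE: "S < E" unfolding S_def E_def
      using block_mono[OF tight, of a b] ab w_pos by force
    have cS: "c (S - 1) = c S" using c_step[of "S - 1"] S1 SE ET SnB by simp
    have cE: "c (E - 1) = c E" using c_step[of "E - 1"] SE ET EnB by simp
    have "cst sigma \<le> cst sR" using optc[OF validR] .
    then have Lle: "cst sL \<le> cst sigma" using R L cS cE by simp
    have optL: "optimal_schedule Pidle Pwork n w T J e G sL"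
      unfolding optimal_schedule_def using validL Lle optc unfolding cst_def by fastforce
    have "(\<Sum>i=1..n. sL i) < (\<Sum>i=1..n. sigma i)"
    proof (rule sum_strict_mono_ex1)
      show "\<forall>x\<in>{1..n}. sL x \<le> sigma x" unfolding sL_def by auto
      show "\<exists>x\<in>{1..n}. sL x < sigma x" using ab S1 sLa unfolding S_def by (intro bexI[of _ a]) auto
    qed simp
    then show False using minsum optL by fastforce
  qed
  show ?thesis using opt cand card_part by blast
qed

end
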